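(* Let $G$ be an infinite group and $A\subseteq G$. Then: (i) for $n\in\mathbb{N}$, $A$ is not $n$-thin if and only if there exist a subset $F\subseteq G$ with $|F|=n+1$ and an injective sequence $(x_k)_{k<\omega}$ in $G$ such that $Fx_k\subseteq A$ for every $k\in\omega$; (ii) $A$ is not sparse if and only if there exist injective sequences $(x_n)_{n<\omega}$, $(y_n)_{n<\omega}$ in $G$ with $x_ny_m\in A$ for all $0\le n\le m<\omega$; (iii) $A$ is not scattered if and only if $A$ contains a piecewise shifted $FP$-set; (iv) $A$ contains a recurrent subset if and only if there exist $x\in A$ and an $FP$-set $Y$ with $xY\subseteq A$.
   Context: $A$ is $n$-thin if for all distinct $g_0,\dots,g_n\in G$ the set $g_0A\cap\dots\cap g_nA$ is finite. $A$ is sparse if for every infinite $X\subseteq G$ there is finite $F\subseteq X$ with $\bigcap_{g\in F}gA$ finite. Identify $\beta G$ with the ultrafilters on $G$ ($gp=\{gP:P\in p\}$), $G^*$ the free ultrafilters, $X^*=\{p\in G^*:X\in p\}$, $\Delta_p(X)=\{gp:g\in G, X\in gp\}$; $A$ is scattered if for every infinite $X\subseteq A$ there is $p\in X^*$ with $\Delta_p(X)$ finite. For an injective sequence $(g_n)_{n\in\omega}$ in $G$, the set $\{g_{i_1}g_{i_2}\cdots g_{i_k}: k\ge1, 0\le i_1<\dots<i_k<\omega\}$ is an $FP$-set; given additionally any sequence $(b_n)_{n\in\omega}$ in $G$, the set $\{g_{i_1}\cdots g_{i_k}b_{i_k}: k\ge1, 0\le i_1<\dots<i_k<\omega\}$ is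 a piecewise shifted $FP$-set. Identify $\mathcal{P}_G$ with $\{0,1\}^G$ (product topology) as a $G$-space via $(B,g)\mapsto Bg$; $B\subseteq G$ is recurrent if for every neighbourhood $U$ of $B$ in $\mathcal{P}_G$ the set $\{g\in G: Bg\in U\}$ is infinite. *)

theory Defs
  imports "HOL-Analysis.Analysis"
begin

text \<open>The group G is the (possibly non-commutative) type 'a of class group_add;
  the group operation is written +. Left translate gA and right translate Bg.\<close>

definition ltrans :: "'a::group_add \<Rightarrow> 'a set \<Rightarrow> 'a set" where
  "ltrans g A = (\<lambda>a. g + a) ` A"

definition rtrans :: "'a::group_add set \<Rightarrow> 'a \<Rightarrow> 'a set" where
  "rtrans B g = (\<lambda>b. b + g) ` B"

definition n_thin :: "nat \<Rightarrow> 'a::group_add set \<Rightarrow> bool" where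
  "n_thin n A \<longleftrightarrow>
     (\<forall>g::nat \<Rightarrow> 'a. inj_on g {..n} \<longrightarrow> finite (\<Inter>i\<in>{..n}. ltrans (g i) A))"

definition sparse :: "'a::group_add set \<Rightarrow> bool" where
  "sparse A \<longleftrightarrow>
     (\<forall>X. infinite X \<longrightarrow> (\<exists>F. F \<subseteq> X \<and> finite F \<and> finite (\<Inter>g\<in>F. ltrans g A)))"

definition ultrafilter_on :: "'a set set \<Rightarrow> bool" where
  "ultrafilter_on p \<longleftrightarrow>
     {} \<notin> p \<and> UNIV \<in> p \<and>
     (\<forall>X Y. X \<in> p \<and> Y \<in> p \<longrightarrow> X \<inter> Y \<in> p) \<and>
     (\<forall>X Y. X \<in> p \<and> X \<subseteq> Y \<longrightarrow> Y \<in> p) \<and>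
     (\<forall>X. X \<in> p \<or> - X \<in> p)"

definition free_uf :: "'a set set \<Rightarrow> bool" where
  "free_uf p \<longleftrightarrow> ultrafilter_on p \<and> (\<forall>X. finite X \<longrightarrow> X \<notin> p)"

definition uf_trans :: "'a::group_add \<Rightarrow> 'a set set \<Rightarrow> 'a set set" where
  "uf_trans g p = ltrans g ` p"

definition ustar :: "'a set \<Rightarrow> 'a set set set" where
  "ustar X = {p. free_uf p \<and> X \<in> p}"

definition Delta :: "'a::group_add set set \<Rightarrow> 'a set \<Rightarrow> 'a set set set" where
  "Delta p X = {uf_trans g p | g. X \<in> uf_trans g p}"

definition scattered :: "'a::group_add set \<Rightarrow> bool" where
  "scattered A \<longleftrightarrow>
     (\<forall>X. X \<subseteq> A \<and> infinite X \<longrightarrow> (\<exists>p\<in>ustar X. finite (Delta p X)))"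

text \<open>FP-set of a sequence g: products g_{i_1}...g_{i_k} with i_1 < ... < i_k, k \<ge> 1,
  encoded by strictly increasing nonempty index lists.\<close>
definition FP :: "(nat \<Rightarrow> 'a::group_add) \<Rightarrow> 'a set" where
  "FP g = {sum_list (map g is) | is. is \<noteq> [] \<and> sorted_wrt (<) is}"

definition PSFP :: "(nat \<Rightarrow> 'a::group_add) \<Rightarrow> (nat \<Rightarrow> 'a) \<Rightarrow> 'a set" where
  "PSFP g b = {sum_list (map g is) + b (last is) | is. is \<noteq> [] \<and> sorted_wrt (<) is}"

text \<open>P_G identified with {0,1}^G = 'a \<Rightarrow> bool with the product topology;
  a set B corresponds to its characteristic function.\<close>
definition recurrent :: "'a::group_add set \<Rightarrow> bool" where
  "recurrent B \<longleftrightarrow>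
     (\<forall>U::('a \<Rightarrow> bool) set.
        (\<exists>V. open V \<and> (\<lambda>x. x \<in> B) \<in> V \<and> V \<subseteq> U) \<longrightarrow>
        infinite {g. (\<lambda>x. x \<in> rtrans B g) \<in> U})"

end

theory Submission
  imports Defs
begin


lemma mem_ltrans: "y \<in> ltrans g A \<longleftrightarrow> -g + y \<in> A"
  unfolding ltrans_def
  by (auto simp: add.assoc[symmetric] intro!: image_eqI[where x="-g+y"])

lemma ltrans_comp: "ltrans a (ltrans b A) = ltrans (a+b) A"
  unfolding ltrans_def by (auto simp: image_image add.assoc)

lemma ltrans_0[simp]: "ltrans 0 A = A" unfolding ltrans_def by simp

lemma ltrans_eq_iff: "X = ltrans g P \<longleftrightarrow> P = ltrans (-g) X"
  by (metis ltrans_comp add.left_inverse add.right_inverse ltrans_0)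

lemma dep_choice:
  assumes "\<And>xs. \<exists>x. Q xs x"
  shows "\<exists>f. \<forall>j. Q (map f [0..<j]) (f j)"
proof -
  define L where "L = rec_nat [] (\<lambda>j l. l @ [SOME x. Q l x])"
  define f where "f j = (SOME x. Q (L j) x)" for j
  have L: "L j = map f [0..<j]" for j
    by (induction j) (simp_all add: L_def f_def)
  have "Q (L j) (f j)" for j unfolding f_def using assms by (rule someI_ex)
  then show ?thesis using L by metis
qed

lemma part1:
  fixes A :: "'a::group_add set"
  shows "\<not> n_thin n A \<longleftrightarrow> (\<exists>F (x::nat \<Rightarrow> 'a). finite F \<and> card F = Suc n \<and> inj x \<and>
                (\<forall>k. (\<lambda>f. f + x k) ` F \<subseteq> A))"
proof
  assume "\<not> n_thin n A"
  then obtain g where g: "inj_on g {..n}" and I: "infinite (\<Inter>i\<in>{..n}. ltrans (g i) A)"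
    unfolding n_thin_def by blast
  obtain x :: "nat \<Rightarrow> 'a" where x: "inj x" "range x \<subseteq> (\<Inter>i\<in>{..n}. ltrans (g i) A)"
    using infinite_countable_subset[OF I] by blast
  have inj: "inj_on (\<lambda>i. - g i) {..n}" using g by (auto simp: inj_on_def)
  show "\<exists>F (x::nat \<Rightarrow> 'a). finite F \<and> card F = Suc n \<and> inj x \<and> (\<forall>k. (\<lambda>f. f + x k) ` F \<subseteq> A)"
  proof (intro exI conjI allI)
    show "finite ((\<lambda>i. - g i) ` {..n})" by simp
    show "card ((\<lambda>i. - g i) ` {..n}) = Suc n" using card_image[OF inj] by simp
    show "inj x" by fact
    fix k show "(\<lambda>f. f + x k) ` (\<lambda>i. - g i) ` {..n} \<subseteq> A"
    proof -
      have "\<And>i. i \<le> n \<Longrightarrow> x k \<in> ltrans (g i) A" using x(2) by blast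
      then show ?thesis by (auto simp: mem_ltrans)
    qed
  qed
next
  assume "\<exists>F (x::nat \<Rightarrow> 'a). finite F \<and> card F = Suc n \<and> inj x \<and> (\<forall>k. (\<lambda>f. f + x k) ` F \<subseteq> A)"
  then obtain F and x :: "nat \<Rightarrow> 'a" where F: "finite F" "card F = Suc n" "inj x"
    "\<And>k. (\<lambda>f. f + x k) ` F \<subseteq> A" by blast
  obtain e where e: "bij_betw e {..n} F"
    using finite_same_card_bij[of "{..n}" F] F by auto
  have inj: "inj_on (\<lambda>i. - e i) {..n}" using e by (auto simp: inj_on_def bij_betw_def)
  have "range x \<subseteq> (\<Inter>i\<in>{..n}. ltrans (- e i) A)"
    using e F(4) by (fastforce simp: mem_ltrans bij_betw_def)
  moreover have "infinite (range x)" using F(3) range_inj_infinite by blast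
  ultimately have "infinite (\<Inter>i\<in>{..n}. ltrans (- e i) A)" using infinite_super by blast
  then show "\<not> n_thin n A" using inj unfolding n_thin_def by blast
qed

lemma part2:
  fixes A :: "'a::group_add set"
  shows "\<not> sparse A \<longleftrightarrow>
            (\<exists>(x::nat \<Rightarrow> 'a) y. inj x \<and> inj y \<and> (\<forall>n m. n \<le> m \<longrightarrow> x n + y m \<in> A))"
proof
  assume "\<not> sparse A"
  then obtain X where X: "infinite X" "\<And>F. F \<subseteq> X \<Longrightarrow> finite F \<Longrightarrow> infinite (\<Inter>g\<in>F. ltrans g A)"
    unfolding sparse_def by blast
  obtain c :: "nat \<Rightarrow> 'a" where c: "inj c" "range c \<subseteq> X"
    using infinite_countable_subset[OF X(1)] by blast
  have I: "infinite (\<Inter>i\<in>{..m}. ltrans (c i) A)" for m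
  proof -
    have "infinite (\<Inter>g\<in>c ` {..m}. ltrans g A)" using c by (intro X(2)) auto
    then show ?thesis by simp
  qed
  have "\<exists>y. y \<in> (\<Inter>i\<in>{..length ys}. ltrans (c i) A) \<and> y \<notin> set ys" for ys
  proof (rule ccontr)
    assume "\<not> ?thesis"
    then have "(\<Inter>i\<in>{..length ys}. ltrans (c i) A) \<subseteq> set ys" by blast
    then show False using I finite_subset by blast
  qed
  then obtain y where y: "\<And>j. y j \<in> (\<Inter>i\<in>{..length (map y [0..<j])}. ltrans (c i) A) \<and> y j \<notin> set (map y [0..<j])"
    using dep_choice[where Q="\<lambda>ys y. y \<in> (\<Inter>i\<in>{..length ys}. ltrans (c i) A) \<and> y \<notin> set ys"] by metis
  have "inj y"
  proof (rule injI)
    fix i j assume "y i = y j"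
    then show "i = j" using y[of i] y[of j]
      by (metis atLeastLessThan_iff imageI linorder_neqE_nat set_map set_upt zero_le)
  qed
  moreover have "inj (\<lambda>n. - c n)" using c(1) by (auto simp: inj_def)
  moreover have "- c n + y m \<in> A" if "n \<le> m" for n m
    using y[of m] that by (auto simp: mem_ltrans)
  ultimately show "\<exists>(x::nat \<Rightarrow> 'a) y. inj x \<and> inj y \<and> (\<forall>n m. n \<le> m \<longrightarrow> x n + y m \<in> A)"
    by blast
next
  assume "\<exists>(x::nat \<Rightarrow> 'a) y. inj x \<and> inj y \<and> (\<forall>n m. n \<le> m \<longrightarrow> x n + y m \<in> A)"
  then obtain x y :: "nat \<Rightarrow> 'a" where xy: "inj x" "inj y" "\<And>n m. n \<le> m \<Longrightarrow> x n + y m \<in> A"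
    by blast
  let ?X = "range (\<lambda>n. - x n)"
  have "inj (\<lambda>n. - x n)" using xy(1) by (auto simp: inj_def)
  then have infX: "infinite ?X" using range_inj_infinite by blast
  have "infinite (\<Inter>g\<in>F. ltrans g A)" if FX: "F \<subseteq> ?X" and Ff: "finite F" for F
  proof -
    obtain C where C: "finite C" "F = (\<lambda>n. - x n) ` C"
      using finite_subset_image[OF Ff FX] by blast
    define N where "N = Max (insert 0 C)"
    have CN: "n \<in> C \<Longrightarrow> n \<le> N" for n using C(1) by (simp add: N_def)
    have "y ` {N..} \<subseteq> (\<Inter>g\<in>F. ltrans g A)"
      using CN xy(3) by (fastforce simp: C(2) mem_ltrans)
    moreover have "infinite (y ` {N..})"
      using xy(2) by (metis finite_imageD infinite_Ici inj_on_subset subset_UNIV)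
    ultimately show ?thesis using infinite_super by blast
  qed
  then show "\<not> sparse A" unfolding sparse_def using infX by blast
qed



lemma ltrans_Int: "ltrans g (A \<inter> B) = ltrans g A \<inter> ltrans g B"
  unfolding ltrans_def by (auto)
lemma ltrans_Un: "ltrans g (A \<union> B) = ltrans g A \<union> ltrans g B"
  unfolding ltrans_def by auto
lemma ltrans_compl: "ltrans g (- A) = - ltrans g A"
  by (auto simp: mem_ltrans)
lemma ltrans_UNIV[simp]: "ltrans g UNIV = UNIV" by (auto simp: mem_ltrans)
lemma ltrans_empty[simp]: "ltrans g {} = {}" by (auto simp: ltrans_def)
lemma ltrans_mono: "A \<subseteq> B \<Longrightarrow> ltrans g A \<subseteq> ltrans g B" unfolding ltrans_def by auto
lemma finite_ltrans[simp]: "finite (ltrans g A) \<longleftrightarrow> finite A"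
proof
  assume "finite (ltrans g A)"
  then have "finite (ltrans (-g) (ltrans g A))" unfolding ltrans_def by simp
  then show "finite A" by (simp add: ltrans_comp)
qed (simp add: ltrans_def)
lemma ltrans_single[simp]: "ltrans g {a} = {g + a}" by (simp add: ltrans_def)

lemma uf_trans_mem: "X \<in> uf_trans g p \<longleftrightarrow> ltrans (-g) X \<in> p"
proof
  assume "X \<in> uf_trans g p"
  then obtain P where "P \<in> p" "X = ltrans g P" unfolding uf_trans_def by blast
  then show "ltrans (-g) X \<in> p" by (simp add: ltrans_comp)
next
  assume "ltrans (-g) X \<in> p"
  moreover have "X = ltrans g (ltrans (-g) X)" by (simp add: ltrans_comp)
  ultimately show "X \<in> uf_trans g p" unfolding uf_trans_def by blast
qed

context
  fixes p :: "'a set set"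
  assumes uf: "ultrafilter_on p"
begin

lemma uf_up: "X \<in> p \<Longrightarrow> X \<subseteq> Y \<Longrightarrow> Y \<in> p"
  using uf unfolding ultrafilter_on_def by blast
lemma uf_Int: "X \<in> p \<Longrightarrow> Y \<in> p \<Longrightarrow> X \<inter> Y \<in> p"
  using uf unfolding ultrafilter_on_def by blast
lemma uf_empty: "{} \<notin> p"
  using uf unfolding ultrafilter_on_def by blast
lemma uf_UNIV: "UNIV \<in> p"
  using uf unfolding ultrafilter_on_def by blast
lemma uf_compl: "- X \<in> p \<longleftrightarrow> X \<notin> p"
proof
  assume "- X \<in> p" then show "X \<notin> p" using uf_Int[of X "-X"] uf_empty by auto
next
  assume n: "X \<notin> p"
  have "X \<in> p \<or> -X \<in> p" using uf unfolding ultrafilter_on_def by blast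
  then show "-X \<in> p" using n by blast
qed
lemma uf_Un: "X \<union> Y \<in> p \<Longrightarrow> X \<in> p \<or> Y \<in> p"
proof (rule ccontr)
  assume a: "X \<union> Y \<in> p" "\<not> (X \<in> p \<or> Y \<in> p)"
  then have "X \<notin> p" "Y \<notin> p" by auto
  then have "-X \<in> p" "-Y \<in> p" by (simp_all add: uf_compl)
  then have "-X \<inter> -Y \<in> p" by (rule uf_Int)
  then have "(X \<union> Y) \<inter> (-X \<inter> -Y) \<in> p" using a uf_Int by blast
  moreover have "(X \<union> Y) \<inter> (-X \<inter> -Y) = {}" by blast
  ultimately have "{} \<in> p" by (simp only:)
  then show False by (rule notE[OF uf_empty])
qed
lemma uf_nonempty: "X \<in> p \<Longrightarrow> X \<noteq> {}" using uf_empty by auto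

end


lemma uf_trans_inj:
  fixes c d :: "'a::group_add"
  assumes uf: "ultrafilter_on p" and eq: "uf_trans c p = uf_trans d p"
  shows "c = d"
proof (rule ccontr)
  assume cd: "c \<noteq> d"
  define e where "e = -d + c"
  have "c = d + e" by (simp add: e_def add.assoc[symmetric])
  then have e0: "e \<noteq> 0" using cd by auto
  have fw: "ltrans e P \<in> p" if "P \<in> p" for P
  proof -
    have "ltrans c P \<in> uf_trans c p" using that by (auto simp: uf_trans_def)
    then have "ltrans c P \<in> uf_trans d p" using eq by simp
    then have "ltrans (-d) (ltrans c P) \<in> p" by (simp add: uf_trans_mem)
    then show ?thesis by (simp add: ltrans_comp e_def)
  qed
  have bw: "ltrans (-e) P \<in> p" if "P \<in> p" for P
  proof -
    have "ltrans d P \<in> uf_trans d p" using that by (auto simp: uf_trans_def)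
    then have "ltrans d P \<in> uf_trans c p" using eq by simp
    then have "ltrans (-c) (ltrans d P) \<in> p" by (simp add: uf_trans_mem)
    moreover have "-e = -c + d" by (simp add: e_def minus_add)
    ultimately show ?thesis by (simp add: ltrans_comp)
  qed
  let ?A = "{P. P \<inter> ltrans e P = {}}"
  have "\<exists>M\<in>?A. \<forall>X\<in>?A. M \<subseteq> X \<longrightarrow> X = M"
  proof (rule subset_Zorn')
    fix C assume ch: "subset.chain ?A C"
    show "\<Union>C \<in> ?A"
    proof (rule ccontr)
      assume "\<Union>C \<notin> ?A"
      then obtain z where z1: "z \<in> \<Union>C" and z2: "z \<in> ltrans e (\<Union>C)" by blast
      from z1 obtain P1 where P1: "P1 \<in> C" "z \<in> P1" by blast
      from z2 have "-e + z \<in> \<Union>C" by (simp add: mem_ltrans)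
      then obtain P2 where P2: "P2 \<in> C" "-e + z \<in> P2" by blast
      from ch P1(1) P2(1) have "P1 \<subseteq> P2 \<or> P2 \<subseteq> P1" by (auto simp: subset_chain_def)
      moreover have "P1 \<in> ?A" "P2 \<in> ?A" using ch P1 P2 by (auto simp: subset_chain_def)
      ultimately show False
      proof (elim disjE)
        assume "P1 \<subseteq> P2"
        then have "z \<in> P2 \<inter> ltrans e P2" using P1 P2 by (auto simp: mem_ltrans)
        then show False using \<open>P2 \<in> ?A\<close> by auto
      next
        assume "P2 \<subseteq> P1"
        then have "z \<in> P1 \<inter> ltrans e P1" using P1 P2 by (auto simp: mem_ltrans)
        then show False using \<open>P1 \<in> ?A\<close> by auto
      qed
    qed
  qed
  then obtain P where PA: "P \<in> ?A" and maxA: "\<forall>X\<in>?A. P \<subseteq> X \<longrightarrow> X = P"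
    by (rule bexE)
  have P: "P \<inter> ltrans e P = {}" using PA by simp
  have max: "X = P" if "X \<inter> ltrans e X = {}" "P \<subseteq> X" for X
    using maxA that by simp
  have cover: "x \<in> P \<or> x \<in> ltrans e P \<or> x \<in> ltrans (-e) P" for x
  proof (rule ccontr)
    assume nx: "\<not> ?thesis"
    then have nx1: "x \<notin> P" and nx2: "-e + x \<notin> P" and nx3: "e + x \<notin> P"
      by (auto simp: mem_ltrans)
    have "insert x P \<inter> ltrans e (insert x P) = {}"
    proof (rule ccontr)
      assume "\<not> ?thesis"
      then obtain z where z: "z \<in> insert x P" "z \<in> ltrans e (insert x P)" by blast
      then have z2: "-e + z \<in> insert x P" by (simp add: mem_ltrans)
      show False
      proof (cases "z = x")
        case True
        have "-e + x \<noteq> x"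
        proof
          assume "-e + x = x"
          then have "-e + x = 0 + x" by simp
          then have "-e = 0" by (rule add_right_imp_eq)
          then show False using e0 by simp
        qed
        then show ?thesis using z2 nx2 True by auto
      next
        case False
        then have zP: "z \<in> P" using z by auto
        have "-e + z \<noteq> x"
        proof
          assume "-e + z = x"
          moreover have "z = e + (-e + z)" by (simp add: add.assoc[symmetric])
          ultimately have "z = e + x" by simp
          then show False using zP nx3 by simp
        qed
        then have "-e + z \<in> P" using z2 by auto
        then have "z \<in> P \<inter> ltrans e P" using zP by (simp add: mem_ltrans)
        then show False using P by simp
      qed
    qed
    moreover have "P \<subseteq> insert x P" by auto
    ultimately have "insert x P = P" using max by blast
    then show False using nx1 by auto
  qed
  have "P \<union> ltrans e P \<union> ltrans (-e) P = UNIV" using cover by blast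
  then have "P \<union> ltrans e P \<union> ltrans (-e) P \<in> p" using uf_UNIV[OF uf] by (simp only:)
  then have "P \<union> ltrans e P \<in> p \<or> ltrans (-e) P \<in> p" by (rule uf_Un[OF uf])
  then have "P \<in> p \<or> ltrans e P \<in> p \<or> ltrans (-e) P \<in> p" using uf_Un[OF uf] by blast
  then have "P \<in> p"
  proof (elim disjE)
    assume "ltrans e P \<in> p" then show "P \<in> p" using bw[of "ltrans e P"] by (simp add: ltrans_comp)
  next
    assume "ltrans (-e) P \<in> p" then show "P \<in> p" using fw[of "ltrans (-e) P"] by (simp add: ltrans_comp)
  qed
  then have "P \<inter> ltrans e P \<in> p" using fw uf_Int[OF uf] by blast
  then show False using P uf_empty[OF uf] by simp
qed



lemma sorted_last_split:
  assumes "sorted_wrt (<) is" "is \<noteq> []"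
  shows "is = butlast is @ [last is]" "\<forall>i\<in>set (butlast is). i < last is"
    "sorted_wrt (<) (butlast is)"
proof -
  show e: "is = butlast is @ [last is]" using assms(2) by simp
  have "sorted_wrt (<) (butlast is @ [last is])" using assms(1) e by metis
  then show "\<forall>i\<in>set (butlast is). i < last is" "sorted_wrt (<) (butlast is)"
    by (simp_all add: sorted_wrt_append)
qed

lemma ltrans_insert: "ltrans g (insert a A) = insert (g + a) (ltrans g A)"
  unfolding ltrans_def by simp

lemma Delta_mem: "X \<in> uf_trans c p \<Longrightarrow> uf_trans c p \<in> Delta p X"
  unfolding Delta_def by blast

lemma part3b:
  fixes A :: "'a::group_add set" and g b :: "nat \<Rightarrow> 'a"
  assumes inj: "inj g" and sub: "PSFP g b \<subseteq> A"
  shows "\<not> scattered A"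
proof -
  define X where "X = PSFP g b"
  define T where "T n = {sum_list (map g is) + b (last is) | is. is \<noteq> [] \<and> sorted_wrt (<) is \<and> (\<forall>i\<in>set is. n \<le> i)}" for n
  define gS where "gS S = sum_list (map g S)" for S
  have T0: "T 0 = X" unfolding T_def X_def PSFP_def by simp
  have Tstep: "T n \<subseteq> {g n + b n} \<union> ltrans (g n) (T (Suc n)) \<union> T (Suc n)" for n
  proof
    fix t assume "t \<in> T n"
    then obtain "is" where t: "t = sum_list (map g is) + b (last is)" and ne: "is \<noteq> []"
      and so: "sorted_wrt (<) is" and ge: "\<forall>i\<in>set is. n \<le> i" unfolding T_def by blast
    show "t \<in> {g n + b n} \<union> ltrans (g n) (T (Suc n)) \<union> T (Suc n)"
    proof (cases "n \<in> set is")
      case False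
      then have "\<forall>i\<in>set is. Suc n \<le> i" using ge by (metis Suc_leI le_neq_implies_less)
      then have "t \<in> T (Suc n)" unfolding T_def using t ne so by blast
      then show ?thesis by blast
    next
      case True
      obtain a rest where ar: "is = a # rest" using ne by (cases "is") auto
      have ra: "\<forall>x\<in>set rest. a < x" and sr: "sorted_wrt (<) rest" using so ar by auto
      have "a = n"
      proof (rule ccontr)
        assume "a \<noteq> n"
        then have "n \<in> set rest" using True ar by auto
        then have "a < n" using ra by auto
        moreover have "n \<le> a" using ge ar by auto
        ultimately show False by simp
      qed
      show ?thesis
      proof (cases "rest = []")
        case True
        then have "t = g n + b n" using t ar \<open>a = n\<close> by simp
        then show ?thesis by blast
      next
        case False
        have "\<forall>i\<in>set rest. Suc n \<le> i" using ra \<open>a = n\<close> by (simp add: Suc_le_eq)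
        then have "sum_list (map g rest) + b (last rest) \<in> T (Suc n)"
          unfolding T_def using False sr by blast
        moreover have "t = g n + (sum_list (map g rest) + b (last rest))"
          using t ar \<open>a = n\<close> False by (simp add: add.assoc)
        ultimately have "t \<in> ltrans (g n) (T (Suc n))" unfolding ltrans_def by blast
        then show ?thesis by blast
      qed
    qed
  qed
  have Tsub: "ltrans (g i) (T n) \<subseteq> X" if "i < n" for i n
  proof
    fix t assume "t \<in> ltrans (g i) (T n)"
    then obtain u where u: "u \<in> T n" "t = g i + u" unfolding ltrans_def by blast
    then obtain "is" where ui: "u = sum_list (map g is) + b (last is)" and ne: "is \<noteq> []"
      and so: "sorted_wrt (<) is" and ge: "\<forall>j\<in>set is. n \<le> j" unfolding T_def by blast
    have "sorted_wrt (<) (i # is)" using so ge that by auto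
    moreover have "t = sum_list (map g (i # is)) + b (last (i # is))"
      using u ui ne by (simp add: add.assoc)
    ultimately show "t \<in> X" unfolding X_def PSFP_def by blast
  qed
  have infX: "infinite X"
  proof
    assume fin: "finite X"
    define W where "W = (\<lambda>(u, v). u + - v) ` (X \<times> X)"
    have "finite W" unfolding W_def using fin by simp
    moreover have "g i \<in> W" for i
    proof -
      define w where "w = g (Suc i) + b (Suc i)"
      have "w \<in> X" unfolding X_def PSFP_def w_def
        by (rule CollectI, rule exI[of _ "[Suc i]"]) simp
      moreover have "g i + w \<in> X" unfolding X_def PSFP_def w_def
        by (rule CollectI, rule exI[of _ "[i, Suc i]"]) (simp add: add.assoc)
      moreover have "g i = (g i + w) + - w" by (simp add: add.assoc)
      ultimately show ?thesis unfolding W_def by (auto intro!: image_eqI[where x="(g i + w, w)"])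
    qed
    then have "range g \<subseteq> W" by blast
    ultimately show False using inj range_inj_infinite finite_subset by blast
  qed
  have Delta_inf: "infinite (Delta p X)" if p: "p \<in> ustar X" for p
  proof -
    have fu: "free_uf p" and Xp: "X \<in> p" using p unfolding ustar_def by auto
    have uf: "ultrafilter_on p" using fu unfolding free_uf_def by simp
    have fin_notin: "finite K \<Longrightarrow> K \<notin> p" for K using fu unfolding free_uf_def by simp
    have ex: "\<exists>S. sorted_wrt (<) S \<and> (\<forall>i\<in>set S. i < n) \<and> ltrans (gS S) (T n) \<in> p" for n
    proof (induction n)
      case 0
      have "ltrans (gS []) (T 0) \<in> p" using Xp T0 by (simp add: gS_def)
      then show ?case by fastforce
    next
      case (Suc n)
      then obtain S where S: "sorted_wrt (<) S" "\<forall>i\<in>set S. i < n" "ltrans (gS S) (T n) \<in> p"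
        by blast
      have "ltrans (gS S) (T n) \<subseteq> ltrans (gS S) ({g n + b n} \<union> ltrans (g n) (T (Suc n)) \<union> T (Suc n))"
        by (rule ltrans_mono[OF Tstep])
      also have "\<dots> = ({gS S + (g n + b n)} \<union> ltrans (gS S + g n) (T (Suc n))) \<union> ltrans (gS S) (T (Suc n))"
        by (simp add: ltrans_insert ltrans_Un ltrans_comp)
      finally have "({gS S + (g n + b n)} \<union> ltrans (gS S + g n) (T (Suc n))) \<union> ltrans (gS S) (T (Suc n)) \<in> p"
        using S(3) uf_up[OF uf] by blast
      then have "({gS S + (g n + b n)} \<union> ltrans (gS S + g n) (T (Suc n))) \<in> p \<or> ltrans (gS S) (T (Suc n)) \<in> p"
        by (rule uf_Un[OF uf])
      moreover have "{gS S + (g n + b n)} \<notin> p" by (rule fin_notin) simp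
      ultimately have "ltrans (gS S + g n) (T (Suc n)) \<in> p \<or> ltrans (gS S) (T (Suc n)) \<in> p"
        using uf_Un[OF uf] by blast
      then show ?case
      proof
        assume a: "ltrans (gS S + g n) (T (Suc n)) \<in> p"
        have "sorted_wrt (<) (S @ [n])" using S by (auto simp: sorted_wrt_append)
        moreover have "\<forall>i\<in>set (S @ [n]). i < Suc n" using S by auto
        moreover have "gS (S @ [n]) = gS S + g n" by (simp add: gS_def)
        ultimately show ?case using a by metis
      next
        assume a: "ltrans (gS S) (T (Suc n)) \<in> p"
        then show ?case using S(1,2) less_Suc_eq by blast
      qed
    qed
    show ?thesis
    proof
      assume finD: "finite (Delta p X)"
      define n where "n = Suc (card (Delta p X))"
      obtain S where S: "ltrans (gS S) (T n) \<in> p" using ex by blast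
      define c where "c i = g i + - gS S" for i
      have mem: "uf_trans (c i) p \<in> Delta p X" if "i < n" for i
      proof (rule Delta_mem)
        have "- c i = gS S + - g i" by (simp add: c_def minus_add)
        moreover have "ltrans (gS S + - g i) (ltrans (g i) (T n)) = ltrans (gS S) (T n)"
          by (simp add: ltrans_comp add.assoc)
        ultimately have "ltrans (gS S) (T n) \<subseteq> ltrans (- c i) X"
          using ltrans_mono[OF Tsub[OF that], of "gS S + - g i"] by simp
        then have "ltrans (- c i) X \<in> p" using S uf_up[OF uf] by blast
        then show "X \<in> uf_trans (c i) p" by (simp add: uf_trans_mem)
      qed
      have injc: "inj_on (\<lambda>i. uf_trans (c i) p) {..<n}"
      proof (rule inj_onI)
        fix i j assume "uf_trans (c i) p = uf_trans (c j) p"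
        then have "c i = c j" by (rule uf_trans_inj[OF uf])
        then have "g i = g j" unfolding c_def by (rule add_right_imp_eq)
        then show "i = j" using inj by (simp add: inj_eq)
      qed
      have "(\<lambda>i. uf_trans (c i) p) ` {..<n} \<subseteq> Delta p X" using mem by blast
      then have "card ((\<lambda>i. uf_trans (c i) p) ` {..<n}) \<le> card (Delta p X)"
        using finD card_mono by blast
      then have "n \<le> card (Delta p X)" using card_image[OF injc] by simp
      then show False unfolding n_def by simp
    qed
  qed
  show ?thesis unfolding scattered_def using sub infX Delta_inf X_def by blast
qed



definition fip :: "'a set set \<Rightarrow> bool" where
  "fip M \<longleftrightarrow> (\<forall>F. F \<subseteq> M \<longrightarrow> finite F \<longrightarrow> \<Inter>F \<noteq> {})"

lemma fip_insert: "fip (insert Y M) \<longleftrightarrow> (\<forall>F. F \<subseteq> M \<longrightarrow> finite F \<longrightarrow> Y \<inter> \<Inter>F \<noteq> {})"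
proof
  assume a: "fip (insert Y M)"
  show "\<forall>F. F \<subseteq> M \<longrightarrow> finite F \<longrightarrow> Y \<inter> \<Inter>F \<noteq> {}"
  proof (intro allI impI)
    fix F assume "F \<subseteq> M" "finite F"
    then have "insert Y F \<subseteq> insert Y M" "finite (insert Y F)" by auto
    then have "\<Inter>(insert Y F) \<noteq> {}" using a unfolding fip_def by blast
    then show "Y \<inter> \<Inter>F \<noteq> {}" by simp
  qed
next
  assume a: "\<forall>F. F \<subseteq> M \<longrightarrow> finite F \<longrightarrow> Y \<inter> \<Inter>F \<noteq> {}"
  show "fip (insert Y M)" unfolding fip_def
  proof (intro allI impI)
    fix F assume "F \<subseteq> insert Y M" "finite F"
    then have "F - {Y} \<subseteq> M" "finite (F - {Y})" by auto
    then have "Y \<inter> \<Inter>(F - {Y}) \<noteq> {}" using a by blast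
    moreover have "Y \<inter> \<Inter>(F - {Y}) \<subseteq> \<Inter>F" by blast
    ultimately show "\<Inter>F \<noteq> {}" by blast
  qed
qed

lemma uf_exists:
  assumes "fip \<F>"
  shows "\<exists>p. ultrafilter_on p \<and> \<F> \<subseteq> p"
proof -
  let ?A = "{M. \<F> \<subseteq> M \<and> fip M}"
  have "\<exists>M\<in>?A. \<forall>X\<in>?A. M \<subseteq> X \<longrightarrow> X = M"
  proof (rule subset_Zorn_nonempty)
    show "?A \<noteq> {}" using assms by blast
  next
    fix C assume C: "C \<noteq> {}" "subset.chain ?A C"
    obtain B0 where "B0 \<in> C" using C(1) by blast
    then have "\<F> \<subseteq> B0" using C(2) by (auto simp: subset_chain_def)
    then have "\<F> \<subseteq> \<Union>C" using \<open>B0 \<in> C\<close> by blast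
    moreover have "fip (\<Union>C)" unfolding fip_def
    proof (intro allI impI)
      fix F assume F: "F \<subseteq> \<Union>C" "finite F"
      show "\<Inter>F \<noteq> {}"
      proof (cases "F = {}")
        case False
        then obtain B where "B \<in> C" "F \<subseteq> B"
          using finite_subset_Union_chain[OF F(2,1) C] by blast
        then have "fip B" using C by (auto simp: subset_chain_def)
        then show ?thesis using \<open>F \<subseteq> B\<close> F(2) unfolding fip_def by blast
      qed simp
    qed
    ultimately show "\<Union>C \<in> ?A" by blast
  qed
  then obtain M where MA: "M \<in> ?A" and maxA: "\<forall>X\<in>?A. M \<subseteq> X \<longrightarrow> X = M" by (rule bexE)
  have fM: "fip M" and FM: "\<F> \<subseteq> M" using MA by auto
  have add: "Y \<in> M" if "fip (insert Y M)" for Y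
  proof -
    have "insert Y M \<in> ?A" using that FM by auto
    moreover have "M \<subseteq> insert Y M" by blast
    ultimately have "insert Y M = M" using maxA by (meson bspec mp)
    then show ?thesis by blast
  qed
  have "ultrafilter_on M" unfolding ultrafilter_on_def
  proof (intro conjI allI impI)
    show "{} \<notin> M"
    proof
      assume "{} \<in> M"
      then have "{{}} \<subseteq> M" by simp
      then have "\<Inter>{{}} \<noteq> {}" using fM unfolding fip_def by blast
      then show False by simp
    qed
    show "UNIV \<in> M"
    proof (rule add, unfold fip_insert, intro allI impI)
      fix F assume "F \<subseteq> M" "finite F"
      then show "UNIV \<inter> \<Inter>F \<noteq> {}" using fM unfolding fip_def by simp
    qed
    fix X Y
    show "X \<inter> Y \<in> M" if "X \<in> M \<and> Y \<in> M"
    proof (rule add, unfold fip_insert, intro allI impI)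
      fix F assume "F \<subseteq> M" "finite F"
      then have "insert X (insert Y F) \<subseteq> M" "finite (insert X (insert Y F))" using that by auto
      then have "\<Inter>(insert X (insert Y F)) \<noteq> {}" using fM unfolding fip_def by blast
      then show "X \<inter> Y \<inter> \<Inter>F \<noteq> {}" by (simp add: Int_assoc)
    qed
    show "Y \<in> M" if "X \<in> M \<and> X \<subseteq> Y"
    proof (rule add, unfold fip_insert, intro allI impI)
      fix F assume "F \<subseteq> M" "finite F"
      then have "insert X F \<subseteq> M" "finite (insert X F)" using that by auto
      then have "\<Inter>(insert X F) \<noteq> {}" using fM unfolding fip_def by blast
      then show "Y \<inter> \<Inter>F \<noteq> {}" using that by auto
    qed
  next
    fix X
    show "X \<in> M \<or> - X \<in> M"
    proof (rule ccontr)
      assume "\<not> ?thesis"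
      then have "\<not> fip (insert X M)" "\<not> fip (insert (-X) M)" using add by blast+
      then obtain F1 F2 where F: "F1 \<subseteq> M" "finite F1" "X \<inter> \<Inter>F1 = {}"
        "F2 \<subseteq> M" "finite F2" "-X \<inter> \<Inter>F2 = {}" unfolding fip_insert by blast
      then have "\<Inter>(F1 \<union> F2) \<noteq> {}" using fM unfolding fip_def by (meson finite_UnI le_sup_iff)
      then obtain z where "z \<in> \<Inter>(F1 \<union> F2)" by blast
      then have "z \<in> \<Inter>F1" "z \<in> \<Inter>F2" by auto
      then show False using F by (cases "z \<in> X") auto
    qed
  qed
  then show ?thesis using FM by blast
qed



lemma cofin_in:
  assumes uf: "ultrafilter_on p" and fr: "\<And>K. finite K \<Longrightarrow> K \<notin> p" and C: "finite (- C)"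
  shows "C \<in> p"
proof -
  have "- C \<notin> p" using fr C by blast
  then show ?thesis using uf_compl[OF uf, of C] by simp
qed

lemma recur_uf:
  fixes X :: "'a::group_add set"
  assumes infX: "infinite X" and H: "\<forall>p\<in>ustar X. infinite (Delta p X)"
  shows "\<exists>p. ultrafilter_on p \<and> X \<in> p \<and> (\<forall>Y\<in>p. infinite {h. ltrans (-h) Y \<in> p})"
proof -
  define S where "S p Y = {h. ltrans (-h) Y \<in> p}" for p and Y :: "'a set"
  define F0 where "F0 = {X \<inter> C | C. finite (- C)}"
  define Qp where "Qp M \<longleftrightarrow> (\<forall>p. ultrafilter_on p \<and> M \<subseteq> p \<longrightarrow> (\<forall>Y\<in>M. infinite (S p Y)))" for M
  define Z where "Z = {M. F0 \<subseteq> M \<and> (\<forall>A\<in>M. \<forall>B\<in>M. A \<inter> B \<in> M) \<and> {} \<notin> M \<and> Qp M}"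
  have XF0: "X \<in> F0" unfolding F0_def by (rule CollectI, rule exI[of _ UNIV]) simp
  have F0p: "(\<forall>K. finite K \<longrightarrow> K \<notin> p) \<and> X \<in> p" if uf: "ultrafilter_on p" and sub: "F0 \<subseteq> p" for p
  proof (intro conjI allI impI)
    show "X \<in> p" using XF0 sub by blast
    fix K :: "'a set" assume "finite K"
    then have "X \<inter> - K \<in> F0" unfolding F0_def by auto
    then have a: "X \<inter> - K \<in> p" using sub by blast
    show "K \<notin> p"
    proof
      assume "K \<in> p"
      then have "(X \<inter> - K) \<inter> K \<in> p" using a uf_Int[OF uf] by blast
      moreover have "(X \<inter> - K) \<inter> K = {}" by blast
      ultimately have "{} \<in> p" by (simp only:)
      then show False by (rule notE[OF uf_empty[OF uf]])
    qed
  qed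
  have SX: "infinite (S p X)" if uf: "ultrafilter_on p" and sub: "F0 \<subseteq> p" for p
  proof
    assume fin: "finite (S p X)"
    have "p \<in> ustar X" using F0p[OF uf sub] uf unfolding ustar_def free_uf_def by blast
    then have "infinite (Delta p X)" using H by blast
    moreover have "Delta p X = (\<lambda>h. uf_trans h p) ` S p X"
      unfolding Delta_def S_def by (auto simp: uf_trans_mem)
    ultimately show False using fin by simp
  qed
  have shiftcof: "ltrans k C \<in> p" if uf: "ultrafilter_on p" and sub: "F0 \<subseteq> p" and C: "finite (- C)" for p k C
  proof (rule cofin_in[OF uf])
    show "finite K \<Longrightarrow> K \<notin> p" for K using F0p[OF uf sub] by blast
    show "finite (- ltrans k C)" using C by (simp add: ltrans_compl[symmetric])
  qed
  have F0Z: "F0 \<in> Z" unfolding Z_def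
  proof (intro CollectI conjI ballI)
    show "F0 \<subseteq> F0" by simp
  next
    fix A B assume "A \<in> F0" "B \<in> F0"
    then obtain C1 C2 where "A = X \<inter> C1" "B = X \<inter> C2" "finite (- C1)" "finite (- C2)"
      unfolding F0_def by blast
    then have "A \<inter> B = X \<inter> (C1 \<inter> C2)" "finite (- (C1 \<inter> C2))" by auto
    then show "A \<inter> B \<in> F0" unfolding F0_def by blast
  next
    show "{} \<notin> F0"
    proof
      assume "{} \<in> F0"
      then obtain C where "X \<inter> C = {}" "finite (- C)" unfolding F0_def by blast
      then have "X \<subseteq> - C" by blast
      then show False using infX \<open>finite (- C)\<close> finite_subset by blast
    qed
  next
    show "Qp F0" unfolding Qp_def
    proof (intro allI impI ballI)
      fix p Y assume a: "ultrafilter_on p \<and> F0 \<subseteq> p" and "Y \<in> F0"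
      then obtain C where Y: "Y = X \<inter> C" "finite (- C)" unfolding F0_def by blast
      have "S p X \<subseteq> S p Y"
      proof
        fix h assume "h \<in> S p X"
        then have "ltrans (-h) X \<in> p" unfolding S_def by simp
        moreover have "ltrans (-h) C \<in> p" using shiftcof a Y(2) by blast
        ultimately have "ltrans (-h) X \<inter> ltrans (-h) C \<in> p" using uf_Int a by blast
        then show "h \<in> S p Y" unfolding S_def Y(1) by (simp add: ltrans_Int)
      qed
      then show "infinite (S p Y)" using SX a infinite_super by blast
    qed
  qed
  have "\<exists>M\<in>Z. \<forall>N\<in>Z. M \<subseteq> N \<longrightarrow> N = M"
  proof (rule subset_Zorn_nonempty)
    show "Z \<noteq> {}" using F0Z by blast
  next
    fix C assume C: "C \<noteq> {}" "subset.chain Z C"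
    have CZ: "M \<in> Z" if "M \<in> C" for M using C(2) that by (auto simp: subset_chain_def)
    have lin: "M \<subseteq> N \<or> N \<subseteq> M" if "M \<in> C" "N \<in> C" for M N
      using C(2) that by (auto simp: subset_chain_def)
    obtain B0 where "B0 \<in> C" using C(1) by blast
    show "\<Union>C \<in> Z" unfolding Z_def
    proof (intro CollectI conjI ballI)
      show "F0 \<subseteq> \<Union>C" using CZ[OF \<open>B0 \<in> C\<close>] \<open>B0 \<in> C\<close> unfolding Z_def by blast
    next
      fix A B assume "A \<in> \<Union>C" "B \<in> \<Union>C"
      then obtain M N where MN: "M \<in> C" "N \<in> C" "A \<in> M" "B \<in> N" by blast
      show "A \<inter> B \<in> \<Union>C"
      proof (cases "M \<subseteq> N")
        case True
        then have "A \<inter> B \<in> N" using CZ[OF MN(2)] MN unfolding Z_def by blast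
        then show ?thesis using MN by blast
      next
        case False
        then have "N \<subseteq> M" using lin MN by blast
        then have "A \<inter> B \<in> M" using CZ[OF MN(1)] MN unfolding Z_def by blast
        then show ?thesis using MN by blast
      qed
    next
      show "{} \<notin> \<Union>C" using CZ unfolding Z_def by blast
    next
      show "Qp (\<Union>C)" unfolding Qp_def
      proof (intro allI impI ballI)
        fix p Y assume a: "ultrafilter_on p \<and> \<Union>C \<subseteq> p" and "Y \<in> \<Union>C"
        then obtain M where "M \<in> C" "Y \<in> M" by blast
        then have "Qp M" "M \<subseteq> p" using CZ a unfolding Z_def by blast+
        then show "infinite (S p Y)" using a \<open>Y \<in> M\<close> unfolding Qp_def by blast
      qed
    qed
  qed
  then obtain M where MZ: "M \<in> Z" and maxZ: "\<forall>N\<in>Z. M \<subseteq> N \<longrightarrow> N = M" by (rule bexE)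
  have F0M: "F0 \<subseteq> M" and MInt: "\<And>A B. A \<in> M \<Longrightarrow> B \<in> M \<Longrightarrow> A \<inter> B \<in> M"
    and Me: "{} \<notin> M" and QM: "Qp M" using MZ unfolding Z_def by blast+
  have "fip M" unfolding fip_def
  proof (intro allI impI)
    fix F assume F: "F \<subseteq> M" "finite F"
    show "\<Inter>F \<noteq> {}"
    proof (cases "F = {}")
      case False
      have "\<Inter>F \<in> M" using F(2) False F(1)
      proof (induction F rule: finite_ne_induct)
        case (singleton x) then show ?case by simp
      next
        case (insert x F) then show ?case using MInt by simp
      qed
      then show ?thesis using Me by metis
    qed simp
  qed
  then obtain p where uf: "ultrafilter_on p" and Mp: "M \<subseteq> p" using uf_exists by blast
  have F0p': "F0 \<subseteq> p" using F0M Mp by blast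
  have Xp: "X \<in> p" using F0p[OF uf F0p'] by blast
  have R: "infinite (S p Y)" if Yp: "Y \<in> p" for Y
  proof
    assume finY: "finite (S p Y)"
    define N where "N = {E. finite {h. ltrans (-h) E \<notin> p}}"
    define M' where "M' = {A \<inter> E | A E. A \<in> M \<and> E \<in> N}"
    have UN: "UNIV \<in> N" unfolding N_def using uf_UNIV[OF uf] by simp
    have MM': "M \<subseteq> M'"
    proof
      fix A assume "A \<in> M"
      then show "A \<in> M'" unfolding M'_def using UN by (intro CollectI exI[of _ A] exI[of _ UNIV]) simp
    qed
    have Nshift: "ltrans k E \<in> N" if "E \<in> N" for k E
    proof -
      have "{h. ltrans (-h) (ltrans k E) \<notin> p} = (\<lambda>h. -k + h) -` {h. ltrans (-h) E \<notin> p}"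
        by (simp add: ltrans_comp minus_add)
      moreover have "inj (\<lambda>h::'a. -k + h)" by (simp add: inj_def)
      moreover have "finite {h. ltrans (-h) E \<notin> p}" using that unfolding N_def by simp
      ultimately have "finite {h. ltrans (-h) (ltrans k E) \<notin> p}"
        by (simp only: finite_vimageI)
      then show ?thesis unfolding N_def by simp
    qed
    have NInt: "E1 \<inter> E2 \<in> N" if "E1 \<in> N" "E2 \<in> N" for E1 E2
    proof -
      have sub: "{h. ltrans (-h) (E1 \<inter> E2) \<notin> p} \<subseteq> {h. ltrans (-h) E1 \<notin> p} \<union> {h. ltrans (-h) E2 \<notin> p}"
      proof (rule subsetI)
        fix h assume h: "h \<in> {h. ltrans (-h) (E1 \<inter> E2) \<notin> p}"
        show "h \<in> {h. ltrans (-h) E1 \<notin> p} \<union> {h. ltrans (-h) E2 \<notin> p}"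
        proof (rule ccontr)
          assume "\<not> ?thesis"
          then have "ltrans (-h) E1 \<in> p" "ltrans (-h) E2 \<in> p" by auto
          then have "ltrans (-h) E1 \<inter> ltrans (-h) E2 \<in> p" by (rule uf_Int[OF uf])
          then show False using h by (simp add: ltrans_Int)
        qed
      qed
      have "finite {h. ltrans (-h) E1 \<notin> p}" "finite {h. ltrans (-h) E2 \<notin> p}"
        using that unfolding N_def by auto
      then have "finite ({h. ltrans (-h) E1 \<notin> p} \<union> {h. ltrans (-h) E2 \<notin> p})" by simp
      then have "finite {h. ltrans (-h) (E1 \<inter> E2) \<notin> p}" using sub finite_subset by auto
      then show ?thesis unfolding N_def by simp
    qed
    have "M' \<in> Z" unfolding Z_def
    proof (intro CollectI conjI ballI)
      show "F0 \<subseteq> M'" using F0M MM' by blast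
    next
      fix A B assume "A \<in> M'" "B \<in> M'"
      then obtain A1 E1 A2 E2 where "A = A1 \<inter> E1" "B = A2 \<inter> E2" "A1 \<in> M" "E1 \<in> N" "A2 \<in> M" "E2 \<in> N"
        unfolding M'_def by blast
      then have "A \<inter> B = (A1 \<inter> A2) \<inter> (E1 \<inter> E2)" "A1 \<inter> A2 \<in> M" "E1 \<inter> E2 \<in> N"
        using MInt NInt by auto
      then show "A \<inter> B \<in> M'" unfolding M'_def by blast
    next
      show "{} \<notin> M'"
      proof
        assume "{} \<in> M'"
        then obtain A E where AE: "A \<inter> E = {}" "A \<in> M" "E \<in> N" unfolding M'_def by blast
        have "infinite (S p A)" using QM uf Mp AE(2) unfolding Qp_def by blast
        moreover have "finite {h. ltrans (-h) E \<notin> p}" using AE(3) unfolding N_def by simp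
        ultimately obtain h where h: "h \<in> S p A" "h \<notin> {h. ltrans (-h) E \<notin> p}"
          using finite_subset[of "S p A" "{h. ltrans (-h) E \<notin> p}"] by blast
        then have "ltrans (-h) A \<inter> ltrans (-h) E \<in> p" using uf_Int[OF uf] unfolding S_def by simp
        then have "ltrans (-h) (A \<inter> E) \<in> p" by (simp add: ltrans_Int)
        then have "{} \<in> p" using AE(1) by simp
        then show False by (rule notE[OF uf_empty[OF uf]])
      qed
    next
      show "Qp M'" unfolding Qp_def
      proof (intro allI impI ballI)
        fix q Y' assume a: "ultrafilter_on q \<and> M' \<subseteq> q" and "Y' \<in> M'"
        then obtain A E where AE: "Y' = A \<inter> E" "A \<in> M" "E \<in> N" unfolding M'_def by blast
        have uq: "ultrafilter_on q" using a by blast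
        have Mq: "M \<subseteq> q" using a MM' by blast
        have Eq: "ltrans k E \<in> q" for k
        proof -
          have "X \<inter> ltrans k E \<in> M'" unfolding M'_def using F0M XF0 Nshift[OF AE(3)] by blast
          then have "X \<inter> ltrans k E \<in> q" using a by blast
          then show ?thesis using uf_up[OF uq] by blast
        qed
        have "S q A \<subseteq> S q Y'"
        proof
          fix h assume "h \<in> S q A"
          then have "ltrans (-h) A \<inter> ltrans (-h) E \<in> q" using uf_Int[OF uq] Eq unfolding S_def by simp
          then show "h \<in> S q Y'" unfolding S_def AE(1) by (simp add: ltrans_Int)
        qed
        moreover have "infinite (S q A)" using QM uq Mq AE(2) unfolding Qp_def by blast
        ultimately show "infinite (S q Y')" using infinite_super by blast
      qed
    qed
    then have M'M: "M' = M" using maxZ MM' by blast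
    have "{h. ltrans (-h) (- Y) \<notin> p} = S p Y"
      unfolding S_def by (simp add: ltrans_compl uf_compl[OF uf])
    then have "- Y \<in> N" unfolding N_def using finY by simp
    then have "X \<inter> - Y \<in> M'" unfolding M'_def using F0M XF0 by blast
    then have "X \<inter> - Y \<in> p" using M'M Mp by blast
    then have "(X \<inter> - Y) \<inter> Y \<in> p" using Yp uf_Int[OF uf] by blast
    moreover have "(X \<inter> - Y) \<inter> Y = {}" by blast
    ultimately have "{} \<in> p" by (simp only:)
    then show False by (rule notE[OF uf_empty[OF uf]])
  qed
  show ?thesis using uf Xp R unfolding S_def by blast
qed



lemma map_nth_upt: "\<forall>i\<in>set is. i < j \<Longrightarrow> map ((!) (map g [0..<j])) is = map g is"
  by (induction "is") auto

lemma sum_split: "xs \<noteq> [] \<Longrightarrow> sum_list (map g xs) = sum_list (map g (butlast xs)) + g (last xs)"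
  by (induction xs rule: rev_induct) auto

lemma last_eq_max:
  assumes "sorted_wrt (<) is" "j \<in> set is" "\<forall>i\<in>set is. i < Suc j"
  shows "last is = j"
proof -
  have ne: "is \<noteq> []" using assms(2) by auto
  note sp = sorted_last_split[OF assms(1) ne]
  have "last is \<in> set is" using ne by simp
  then have "last is \<le> j" using assms(3) by auto
  show ?thesis
  proof (rule ccontr)
    assume "last is \<noteq> j"
    moreover have "set is = set (butlast is) \<union> {last is}" using sp(1) by (metis set_append empty_set list.simps(15))
    ultimately have "j \<in> set (butlast is)" using assms(2) by auto
    then have "j < last is" using sp(2) by blast
    then show False using \<open>last is \<le> j\<close> by simp
  qed
qed

lemma part3a:
  fixes A :: "'a::group_add set"
  assumes infU: "infinite (UNIV :: 'a set)" and ns: "\<not> scattered A"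
  shows "\<exists>(g::nat \<Rightarrow> 'a) b. inj g \<and> PSFP g b \<subseteq> A"
proof -
  obtain X where XA: "X \<subseteq> A" and infX: "infinite X" and H: "\<forall>p\<in>ustar X. infinite (Delta p X)"
    using ns unfolding scattered_def by blast
  obtain p where uf: "ultrafilter_on p" and Xp: "X \<in> p"
    and R: "\<And>Y. Y \<in> p \<Longrightarrow> infinite {h. ltrans (-h) Y \<in> p}"
    using recur_uf[OF infX H] by blast
  define Yof where "Yof xs = {y. \<forall>is. sorted_wrt (<) is \<and> (\<forall>i\<in>set is. i < length xs) \<longrightarrow>
      sum_list (map ((!) xs) is) + y \<in> X}" for xs :: "'a list"
  have chx: "\<exists>x. x \<notin> set xs \<and> (Yof xs \<in> p \<longrightarrow> ltrans (-x) (Yof xs) \<in> p)" for xs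
  proof (cases "Yof xs \<in> p")
    case True
    then have "infinite {h. ltrans (-h) (Yof xs) \<in> p}" by (rule R)
    then have "\<not> {h. ltrans (-h) (Yof xs) \<in> p} \<subseteq> set xs" using finite_subset by blast
    then show ?thesis by blast
  next
    case False
    obtain x where "x \<notin> set xs" using ex_new_if_finite[OF infU, of "set xs"] by blast
    then show ?thesis using False by blast
  qed
  have "\<exists>g. \<forall>j. g j \<notin> set (map g [0..<j]) \<and>
      (Yof (map g [0..<j]) \<in> p \<longrightarrow> ltrans (- g j) (Yof (map g [0..<j])) \<in> p)"
    by (rule dep_choice[where Q="\<lambda>xs x. x \<notin> set xs \<and> (Yof xs \<in> p \<longrightarrow> ltrans (-x) (Yof xs) \<in> p)"])
      (rule chx)
  then obtain g where gQ': "\<forall>j. g j \<notin> set (map g [0..<j]) \<and>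
      (Yof (map g [0..<j]) \<in> p \<longrightarrow> ltrans (- g j) (Yof (map g [0..<j])) \<in> p)"
    by (rule exE)
  have gQ: "g j \<notin> set (map g [0..<j]) \<and>
      (Yof (map g [0..<j]) \<in> p \<longrightarrow> ltrans (- g j) (Yof (map g [0..<j])) \<in> p)" for j
    using gQ' by (rule spec)
  define Yg where "Yg j = {y. \<forall>is. sorted_wrt (<) is \<and> (\<forall>i\<in>set is. i < j) \<longrightarrow>
      sum_list (map g is) + y \<in> X}" for j
  have Yeq: "Yof (map g [0..<j]) = Yg j" for j
  proof -
    have "(sorted_wrt (<) is \<and> (\<forall>i\<in>set is. i < length (map g [0..<j])) \<longrightarrow>
      sum_list (map ((!) (map g [0..<j])) is) + y \<in> X) \<longleftrightarrow>
      (sorted_wrt (<) is \<and> (\<forall>i\<in>set is. i < j) \<longrightarrow> sum_list (map g is) + y \<in> X)" for "is" y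
    proof (cases "\<forall>i\<in>set is. i < j")
      case True
      have e: "map ((!) (map g [0..<j])) is = map g is" by (rule map_nth_upt[OF True])
      show ?thesis by (simp only: e length_map length_upt diff_zero)
    next
      case False then show ?thesis by (simp only: length_map length_upt diff_zero) blast
    qed
    then show ?thesis unfolding Yof_def Yg_def by (simp only:)
  qed
  have nil0: "is = []" if "\<forall>i\<in>set is. i < (0::nat)" for "is"
    using that by (cases "is") auto
  have Y0: "Yg 0 = X"
  proof (rule equalityI)
    show "Yg 0 \<subseteq> X"
    proof
      fix y assume "y \<in> Yg 0"
      then have "\<forall>is. sorted_wrt (<) is \<and> (\<forall>i\<in>set is. i < 0) \<longrightarrow> sum_list (map g is) + y \<in> X"
        unfolding Yg_def mem_Collect_eq .
      note h = this[rule_format, of "[]"]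
      have "sum_list (map g []) + y \<in> X" by (rule h) simp_all
      then show "y \<in> X" by simp
    qed
    show "X \<subseteq> Yg 0"
    proof
      fix y assume y: "y \<in> X"
      show "y \<in> Yg 0" unfolding Yg_def mem_Collect_eq
      proof (intro allI impI)
        fix "is" :: "nat list" assume "sorted_wrt (<) is \<and> (\<forall>i\<in>set is. i < 0)"
        then have "\<forall>i\<in>set is. i < 0" by (rule conjunct2)
        then have "is = []" by (rule nil0)
        then show "sum_list (map g is) + y \<in> X" using y by simp
      qed
    qed
  qed
  have Ystep: "Yg j \<inter> ltrans (- g j) (Yg j) \<subseteq> Yg (Suc j)" for j
  proof
    fix y assume y: "y \<in> Yg j \<inter> ltrans (- g j) (Yg j)"
    then have y1: "y \<in> Yg j" and y2: "g j + y \<in> Yg j" by (auto simp: mem_ltrans)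
    show "y \<in> Yg (Suc j)" unfolding Yg_def
    proof (intro CollectI allI impI)
      fix "is" :: "nat list" assume a: "sorted_wrt (<) is \<and> (\<forall>i\<in>set is. i < Suc j)"
      show "sum_list (map g is) + y \<in> X"
      proof (cases "j \<in> set is")
        case False
        then have "\<forall>i\<in>set is. i < j" using a less_Suc_eq by auto
        then show ?thesis using y1 a unfolding Yg_def by blast
      next
        case True
        have ne: "is \<noteq> []" using True by auto
        have lj: "last is = j" using last_eq_max a True by blast
        note sp = sorted_last_split[of "is", OF _ ne]
        have bl: "sorted_wrt (<) (butlast is)" "\<forall>i\<in>set (butlast is). i < j"
          using sp a lj by auto
        have "sum_list (map g is) = sum_list (map g (butlast is)) + g j"
          using sum_split[OF ne, of g] lj by simp
        moreover have "sum_list (map g (butlast is)) + (g j + y) \<in> X" using y2 bl unfolding Yg_def by blast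
        ultimately show ?thesis by (simp add: add.assoc)
      qed
    qed
  qed
  have Yp: "Yg j \<in> p" for j
  proof (induction j)
    case 0 then show ?case using Y0 Xp by simp
  next
    case (Suc j)
    then have "ltrans (- g j) (Yg j) \<in> p" using gQ[of j] Yeq by simp
    then have "Yg j \<inter> ltrans (- g j) (Yg j) \<in> p" using Suc uf_Int[OF uf] by blast
    then show ?case using Ystep uf_up[OF uf] by blast
  qed
  define y where "y j = (SOME z. z \<in> Yg j)" for j
  have yY: "y j \<in> Yg j" for j
  proof -
    have "Yg j \<noteq> {}" using Yp uf_nonempty[OF uf] by blast
    then show ?thesis unfolding y_def by (simp add: some_in_eq)
  qed
  define b where "b j = - g j + y j" for j
  have "PSFP g b \<subseteq> X"
  proof
    fix t assume "t \<in> PSFP g b"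
    then obtain "is" where t: "t = sum_list (map g is) + b (last is)" and ne: "is \<noteq> []"
      and so: "sorted_wrt (<) is" unfolding PSFP_def by blast
    note sp = sorted_last_split[OF so ne]
    have "sum_list (map g is) = sum_list (map g (butlast is)) + g (last is)"
      by (rule sum_split[OF ne])
    then have "t = sum_list (map g (butlast is)) + y (last is)"
      using t by (simp add: b_def add.assoc)
    moreover have "sum_list (map g (butlast is)) + y (last is) \<in> X"
      using yY[of "last is"] sp(2,3) unfolding Yg_def by blast
    ultimately show "t \<in> X" by simp
  qed
  moreover have "inj g"
  proof (rule injI)
    fix i j assume e: "g i = g j"
    show "i = j"
    proof (rule ccontr)
      assume "i \<noteq> j"
      then consider "i < j" | "j < i" by linarith
      then show False
      proof cases
        case 1 then have "g i \<in> set (map g [0..<j])" by simp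
        then show False using gQ[of j] e by simp
      next
        case 2 then have "g j \<in> set (map g [0..<i])" by simp
        then show False using gQ[of i] e by simp
      qed
    qed
  qed
  ultimately show ?thesis using XA by blast
qed



lemma mem_rtrans: "k \<in> rtrans B g \<longleftrightarrow> k + - g \<in> B"
proof
  assume "k \<in> rtrans B g"
  then obtain b where "b \<in> B" "k = b + g" unfolding rtrans_def by blast
  then show "k + - g \<in> B" by (simp add: add.assoc)
next
  assume a: "k + - g \<in> B"
  have "k = (k + - g) + g" by (simp add: add.assoc)
  then show "k \<in> rtrans B g" unfolding rtrans_def using a by blast
qed

lemma cyl_open:
  assumes "finite K"
  shows "open {f::'a \<Rightarrow> bool. \<forall>k\<in>K. f k = (k \<in> B)}"
proof -
  have "open {f::'a \<Rightarrow> bool. \<forall>i\<in>K. f (id i) \<in> {i \<in> B}}"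
    by (rule product_topology_basis'[OF assms]) (rule open_discrete)
  moreover have "{f::'a \<Rightarrow> bool. \<forall>i\<in>K. f (id i) \<in> {i \<in> B}} = {f. \<forall>k\<in>K. f k = (k \<in> B)}"
    by simp
  ultimately show ?thesis by simp
qed

lemma nbhd_cyl:
  assumes V: "open V" and BV: "(\<lambda>x. x \<in> B) \<in> V"
  shows "\<exists>K. finite K \<and> {f. \<forall>k\<in>K. f k = (k \<in> B)} \<subseteq> V"
proof -
  have "openin (product_topology (\<lambda>i. euclidean) UNIV) V" using V unfolding open_fun_def .
  from product_topology_open_contains_basis[OF this BV] obtain X where
    X: "(\<lambda>x. x \<in> B) \<in> Pi\<^sub>E UNIV X" "\<And>i. openin euclidean (X i)"
       "finite {i. X i \<noteq> topspace euclidean}" "Pi\<^sub>E UNIV X \<subseteq> V" by blast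
  define K where "K = {i. X i \<noteq> UNIV}"
  have "finite K" using X(3) unfolding K_def by simp
  moreover have "{f. \<forall>k\<in>K. f k = (k \<in> B)} \<subseteq> V"
  proof
    fix f :: "'a \<Rightarrow> bool" assume f: "f \<in> {f. \<forall>k\<in>K. f k = (k \<in> B)}"
    have "f i \<in> X i" for i
    proof (cases "i \<in> K")
      case True
      then have "f i = (i \<in> B)" using f by blast
      moreover have "(i \<in> B) \<in> X i" using X(1) by (auto simp: PiE_iff)
      ultimately show ?thesis by simp
    next
      case False then show ?thesis unfolding K_def by simp
    qed
    then have "f \<in> Pi\<^sub>E UNIV X" by (simp add: PiE_iff)
    then show "f \<in> V" using X(4) by blast
  qed
  ultimately show ?thesis by blast
qed

lemma recurrent_iff:
  "recurrent B \<longleftrightarrow> (\<forall>K. finite K \<longrightarrow> infinite {g. \<forall>k\<in>K. (k \<in> rtrans B g) = (k \<in> B)})"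
proof
  assume r: "recurrent B"
  show "\<forall>K. finite K \<longrightarrow> infinite {g. \<forall>k\<in>K. (k \<in> rtrans B g) = (k \<in> B)}"
  proof (intro allI impI)
    fix K :: "'a set" assume K: "finite K"
    let ?U = "{f::'a \<Rightarrow> bool. \<forall>k\<in>K. f k = (k \<in> B)}"
    have "\<exists>V. open V \<and> (\<lambda>x. x \<in> B) \<in> V \<and> V \<subseteq> ?U" using cyl_open[OF K, of B] by blast
    then have "infinite {g. (\<lambda>x. x \<in> rtrans B g) \<in> ?U}" using r unfolding recurrent_def by blast
    then show "infinite {g. \<forall>k\<in>K. (k \<in> rtrans B g) = (k \<in> B)}" by simp
  qed
next
  assume a: "\<forall>K. finite K \<longrightarrow> infinite {g. \<forall>k\<in>K. (k \<in> rtrans B g) = (k \<in> B)}"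
  show "recurrent B" unfolding recurrent_def
  proof (intro allI impI)
    fix U :: "('a \<Rightarrow> bool) set" assume "\<exists>V. open V \<and> (\<lambda>x. x \<in> B) \<in> V \<and> V \<subseteq> U"
    then obtain V where V: "open V" "(\<lambda>x. x \<in> B) \<in> V" "V \<subseteq> U" by blast
    obtain K where K: "finite K" "{f. \<forall>k\<in>K. f k = (k \<in> B)} \<subseteq> V" using nbhd_cyl[OF V(1,2)] by blast
    have "{g. \<forall>k\<in>K. (k \<in> rtrans B g) = (k \<in> B)} \<subseteq> {g. (\<lambda>x. x \<in> rtrans B g) \<in> U}"
      using K(2) V(3) by auto
    then show "infinite {g. (\<lambda>x. x \<in> rtrans B g) \<in> U}" using a K(1) infinite_super by blast
  qed
qed

lemma finite_sorted_lists: "finite {is::nat list. sorted_wrt (<) is \<and> (\<forall>i\<in>set is. i < n)}"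
proof (rule finite_subset)
  show "{is::nat list. sorted_wrt (<) is \<and> (\<forall>i\<in>set is. i < n)} \<subseteq> {xs. set xs \<subseteq> {..<n} \<and> length xs \<le> n}"
  proof
    fix xs :: "nat list" assume a: "xs \<in> {is. sorted_wrt (<) is \<and> (\<forall>i\<in>set is. i < n)}"
    then have "distinct xs" "set xs \<subseteq> {..<n}" by (auto simp: strict_sorted_iff)
    moreover have "card (set xs) \<le> card {..<n}" using \<open>set xs \<subseteq> {..<n}\<close> by (intro card_mono) auto
    ultimately show "xs \<in> {xs. set xs \<subseteq> {..<n} \<and> length xs \<le> n}" by (simp add: distinct_card)
  qed
  show "finite {xs. set xs \<subseteq> {..<n} \<and> length xs \<le> n}" by (rule finite_lists_length_le) simp
qed



lemma part4a:
  fixes A :: "'a::group_add set"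
  assumes infU: "infinite (UNIV :: 'a set)" and BA: "B \<subseteq> A" and Bne: "B \<noteq> {}" and rec: "recurrent B"
  shows "\<exists>x\<in>A. \<exists>h::nat \<Rightarrow> 'a. inj h \<and> (\<lambda>y. x + y) ` FP h \<subseteq> A"
proof -
  obtain x where xB: "x \<in> B" using Bne by blast
  have R: "\<And>K. finite K \<Longrightarrow> infinite {g. \<forall>k\<in>K. (k \<in> rtrans B g) = (k \<in> B)}"
    using rec unfolding recurrent_iff by blast
  define Kof where "Kof xs = (\<lambda>is. x + sum_list (map ((!) xs) is)) `
      {is::nat list. sorted_wrt (<) is \<and> (\<forall>i\<in>set is. i < length xs)}" for xs :: "'a list"
  have finK: "finite (Kof xs)" for xs unfolding Kof_def using finite_sorted_lists by blast
  have chx: "\<exists>h. h \<notin> set xs \<and> (Kof xs \<subseteq> B \<longrightarrow> (\<forall>k\<in>Kof xs. k + h \<in> B))" for xs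
  proof (cases "Kof xs \<subseteq> B")
    case True
    let ?G = "{g. \<forall>k\<in>Kof xs. (k \<in> rtrans B g) = (k \<in> B)}"
    have "infinite ?G" using R finK by blast
    then have "infinite (uminus ` ?G)" using finite_imageD[of uminus ?G] by (auto simp: inj_on_def)
    then have "\<not> uminus ` ?G \<subseteq> set xs" using finite_subset by blast
    then obtain g where g: "g \<in> ?G" "- g \<notin> set xs" by blast
    have "\<forall>k\<in>Kof xs. k + - g \<in> B"
    proof
      fix k assume k: "k \<in> Kof xs"
      then have "k \<in> B" using True by blast
      then have "k \<in> rtrans B g" using g(1) k by blast
      then show "k + - g \<in> B" by (simp add: mem_rtrans)
    qed
    then show ?thesis using g(2) by blast
  next
    case False
    obtain h where "h \<notin> set xs" using ex_new_if_finite[OF infU, of "set xs"] by blast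
    then show ?thesis using False by blast
  qed
  have "\<exists>h. \<forall>j. h j \<notin> set (map h [0..<j]) \<and>
      (Kof (map h [0..<j]) \<subseteq> B \<longrightarrow> (\<forall>k\<in>Kof (map h [0..<j]). k + h j \<in> B))"
    by (rule dep_choice[where Q="\<lambda>xs h. h \<notin> set xs \<and> (Kof xs \<subseteq> B \<longrightarrow> (\<forall>k\<in>Kof xs. k + h \<in> B))"])
      (rule chx)
  then obtain h where hQ': "\<forall>j. h j \<notin> set (map h [0..<j]) \<and>
      (Kof (map h [0..<j]) \<subseteq> B \<longrightarrow> (\<forall>k\<in>Kof (map h [0..<j]). k + h j \<in> B))"
    by (rule exE)
  have hQ: "h j \<notin> set (map h [0..<j]) \<and>
      (Kof (map h [0..<j]) \<subseteq> B \<longrightarrow> (\<forall>k\<in>Kof (map h [0..<j]). k + h j \<in> B))" for j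
    using hQ' by (rule spec)
  define Kh where "Kh j = (\<lambda>is. x + sum_list (map h is)) `
      {is::nat list. sorted_wrt (<) is \<and> (\<forall>i\<in>set is. i < j)}" for j
  have Keq: "Kof (map h [0..<j]) = Kh j" for j
  proof -
    have "(\<lambda>is. x + sum_list (map ((!) (map h [0..<j])) is)) ` {is::nat list. sorted_wrt (<) is \<and> (\<forall>i\<in>set is. i < j)}
        = (\<lambda>is. x + sum_list (map h is)) ` {is::nat list. sorted_wrt (<) is \<and> (\<forall>i\<in>set is. i < j)}"
      by (rule image_cong) (simp_all add: map_nth_upt)
    then show ?thesis unfolding Kof_def Kh_def by (simp only: length_map length_upt diff_zero)
  qed
  have KB: "Kh j \<subseteq> B" for j
  proof (induction j)
    case 0
    have "Kh 0 \<subseteq> {x}"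
    proof
      fix k assume "k \<in> Kh 0"
      then obtain "is" where "k = x + sum_list (map h is)" "\<forall>i\<in>set is. i < (0::nat)"
        unfolding Kh_def by blast
      moreover then have "is = []" by (cases "is") auto
      ultimately show "k \<in> {x}" by simp
    qed
    then show ?case using xB by blast
  next
    case (Suc j)
    have step: "\<forall>k\<in>Kh j. k + h j \<in> B" using hQ[of j] Suc Keq by simp
    show ?case
    proof
      fix k assume "k \<in> Kh (Suc j)"
      then obtain "is" where k: "k = x + sum_list (map h is)" and so: "sorted_wrt (<) is"
        and lt: "\<forall>i\<in>set is. i < Suc j" unfolding Kh_def by blast
      show "k \<in> B"
      proof (cases "j \<in> set is")
        case False
        then have "\<forall>i\<in>set is. i < j" using lt less_Suc_eq by auto
        then have "k \<in> Kh j" unfolding Kh_def using k so by blast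
        then show ?thesis using Suc by blast
      next
        case True
        have ne: "is \<noteq> []" using True by auto
        have lj: "last is = j" using last_eq_max so True lt by blast
        note sp = sorted_last_split[OF so ne]
        have "x + sum_list (map h (butlast is)) \<in> Kh j"
          unfolding Kh_def using sp(2,3) lj by auto
        then have "(x + sum_list (map h (butlast is))) + h j \<in> B" using step by blast
        moreover have "k = (x + sum_list (map h (butlast is))) + h j"
          using k sum_split[OF ne, of h] lj by (simp add: add.assoc)
        ultimately show ?thesis by simp
      qed
    qed
  qed
  have "inj h"
  proof (rule injI)
    fix i j assume e: "h i = h j"
    show "i = j"
    proof (rule ccontr)
      assume "i \<noteq> j"
      then consider "i < j" | "j < i" by linarith
      then show False
      proof cases
        case 1 then have "h i \<in> set (map h [0..<j])" by simp
        then show False using hQ[of j] e by simp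
      next
        case 2 then have "h j \<in> set (map h [0..<i])" by simp
        then show False using hQ[of i] e by simp
      qed
    qed
  qed
  moreover have "(\<lambda>y. x + y) ` FP h \<subseteq> B"
  proof
    fix t assume "t \<in> (\<lambda>y. x + y) ` FP h"
    then obtain "is" where t: "t = x + sum_list (map h is)" and ne: "is \<noteq> []" and so: "sorted_wrt (<) is"
      unfolding FP_def by blast
    note sp = sorted_last_split[OF so ne]
    have "\<forall>i\<in>set is. i < Suc (last is)"
    proof
      fix i assume "i \<in> set is"
      then have "i \<in> set (butlast is) \<or> i = last is" using sp(1) by (metis Un_iff empty_iff empty_set list.simps(15) set_append insertE)
      then show "i < Suc (last is)" using sp(2) by fastforce
    qed
    then have "t \<in> Kh (Suc (last is))" unfolding Kh_def using t so by blast
    then show "t \<in> B" using KB by blast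
  qed
  ultimately show ?thesis using BA xB by blast
qed



definition sumsF :: "(nat \<Rightarrow> 'a::group_add) \<Rightarrow> nat \<Rightarrow> 'a set" where
  "sumsF f j = (\<lambda>is. sum_list (map f is)) ` {is::nat list. sorted_wrt (<) is \<and> (\<forall>i\<in>set is. i < j)}"

definition VF :: "(nat \<Rightarrow> 'a::group_add) \<Rightarrow> nat \<Rightarrow> 'a set" where
  "VF f j = (\<lambda>(s, m). s + - f m) ` (sumsF f j \<times> {..<j})"

definition ForbF :: "(nat \<Rightarrow> 'a::group_add) \<Rightarrow> nat \<Rightarrow> 'a set" where
  "ForbF f j = (\<lambda>(v, s). - v + s) ` (VF f j \<times> sumsF f j)
     \<union> (\<lambda>((s, v), m). - s + v + f m) ` ((sumsF f j \<times> VF f j) \<times> {..<j}) \<union> f ` {..<j}"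

lemma finite_ForbF: "finite (ForbF f j)"
proof -
  have "finite (sumsF f j)" unfolding sumsF_def using finite_sorted_lists by blast
  moreover then have "finite (VF f j)" unfolding VF_def by simp
  ultimately show ?thesis unfolding ForbF_def by simp
qed

lemma sumsF_cong: "(\<And>i. i < j \<Longrightarrow> f1 i = f2 i) \<Longrightarrow> sumsF f1 j = sumsF f2 j"
  unfolding sumsF_def
proof (rule image_cong)
  fix "is" assume a: "\<And>i. i < j \<Longrightarrow> f1 i = f2 i" and "is \<in> {is::nat list. sorted_wrt (<) is \<and> (\<forall>i\<in>set is. i < j)}"
  then have "\<forall>i\<in>set is. i < j" by blast
  then have "map f1 is = map f2 is" using a by (intro map_cong) auto
  then show "sum_list (map f1 is) = sum_list (map f2 is)" by (rule arg_cong)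
qed simp

lemma VF_cong: "(\<And>i. i < j \<Longrightarrow> f1 i = f2 i) \<Longrightarrow> VF f1 j = VF f2 j"
  unfolding VF_def using sumsF_cong[of j f1 f2] by (intro image_cong) auto

lemma ForbF_cong: "(\<And>i. i < j \<Longrightarrow> f1 i = f2 i) \<Longrightarrow> ForbF f1 j = ForbF f2 j"
proof -
  assume a: "\<And>i. i < j \<Longrightarrow> f1 i = f2 i"
  have s: "sumsF f1 j = sumsF f2 j" and v: "VF f1 j = VF f2 j" using sumsF_cong VF_cong a by blast+
  have "(\<lambda>((s, v), m). - s + v + f1 m) ` ((sumsF f1 j \<times> VF f1 j) \<times> {..<j})
      = (\<lambda>((s, v), m). - s + v + f2 m) ` ((sumsF f2 j \<times> VF f2 j) \<times> {..<j})"
    unfolding s v using a by (intro image_cong) auto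
  moreover have "f1 ` {..<j} = f2 ` {..<j}" using a by (intro image_cong) auto
  ultimately show ?thesis unfolding ForbF_def s v by simp
qed

lemma sumsF_mono: "t \<le> j \<Longrightarrow> sumsF f t \<subseteq> sumsF f j"
  unfolding sumsF_def by (intro image_mono) auto

lemma VF_mono: "t \<le> j \<Longrightarrow> VF f t \<subseteq> VF f j"
  unfolding VF_def using sumsF_mono[of t j f] by (intro image_mono) auto

lemma sumsF_mem: "sorted_wrt (<) is \<Longrightarrow> \<forall>i\<in>set is. i < j \<Longrightarrow> sum_list (map f is) \<in> sumsF f j"
  unfolding sumsF_def by blast

lemma VF_mem: "s \<in> sumsF f j \<Longrightarrow> m < j \<Longrightarrow> s + - f m \<in> VF f j"
  unfolding VF_def by (rule image_eqI[where x="(s, m)"]) auto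

lemma Forb1: "v \<in> VF f j \<Longrightarrow> s \<in> sumsF f j \<Longrightarrow> - v + s \<in> ForbF f j"
  unfolding ForbF_def by (rule UnI1, rule UnI1, rule image_eqI[where x="(v, s)"]) auto

lemma Forb2: "s \<in> sumsF f j \<Longrightarrow> v \<in> VF f j \<Longrightarrow> m < j \<Longrightarrow> - s + v + f m \<in> ForbF f j"
  unfolding ForbF_def by (rule UnI1, rule UnI2, rule image_eqI[where x="((s, v), m)"]) auto

lemma all_lt_last:
  fixes "is" :: "nat list"
  assumes "sorted_wrt (<) is" "is \<noteq> []"
  shows "\<forall>i\<in>set is. i \<le> last is"
proof
  fix i assume "i \<in> set is"
  note sp = sorted_last_split[OF assms]
  have "set is = set (butlast is) \<union> {last is}" using sp(1) by (metis set_append empty_set list.simps(15))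
  then have "i \<in> set (butlast is) \<or> i = last is" using \<open>i \<in> set is\<close> by blast
  then show "i \<le> last is"
  proof
    assume "i \<in> set (butlast is)" then show ?thesis using sp(2) by (simp add: less_imp_le)
  qed simp
qed

lemma key_generic:
  fixes f :: "nat \<Rightarrow> 'a::group_add"
  assumes gen: "\<And>j. f j \<notin> ForbF f j"
    and notD: "k \<notin> D" and D: "D = (\<lambda>is. sum_list (map f is)) ` {is. sorted_wrt (<) is}"
    and kD: "k + f m \<in> D"
  shows "\<exists>j\<ge>m. k \<in> VF f (Suc j) \<and> k \<notin> VF f j"
proof -
  obtain S where S: "sorted_wrt (<) S" "k + f m = sum_list (map f S)" using kD D by blast
  have k: "k = sum_list (map f S) + - f m"
  proof -
    have "k = (k + f m) + - f m" by (simp add: add.assoc)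
    then show ?thesis using S(2) by simp
  qed
  have lowcase: "\<exists>j\<ge>m. k \<in> VF f (Suc j) \<and> k \<notin> VF f j" if lt: "\<forall>i\<in>set S. i < m"
  proof -
    have "\<forall>i\<in>set S. i < Suc m" using lt by auto
    then have "sum_list (map f S) \<in> sumsF f (Suc m)" by (rule sumsF_mem[OF S(1)])
    then have inV: "k \<in> VF f (Suc m)" unfolding k by (intro VF_mem) auto
    have notV: "k \<notin> VF f m"
    proof
      assume kv: "k \<in> VF f m"
      have "sum_list (map f S) \<in> sumsF f m" by (rule sumsF_mem[OF S(1) lt])
      then have "- k + sum_list (map f S) \<in> ForbF f m" using Forb1[OF kv] by blast
      moreover have "- k + sum_list (map f S) = f m" unfolding k by (simp add: minus_add add.assoc)
      ultimately show False using gen by simp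
    qed
    show ?thesis using inV notV by (intro exI[of _ m]) auto
  qed
  consider "S = []" | "S \<noteq> [] \<and> last S < m" | "S \<noteq> [] \<and> last S = m" | "S \<noteq> [] \<and> m < last S"
    by linarith
  then show ?thesis
  proof cases
    case 3
    then have ne: "S \<noteq> []" and lm: "last S = m" by auto
    note sp = sorted_last_split[OF S(1) ne]
    have "k + f m = sum_list (map f (butlast S)) + f m" using S(2) sum_split[OF ne, of f] lm by simp
    then have "k = sum_list (map f (butlast S))" by (rule add_right_imp_eq)
    then have "k \<in> D" using D sp(3) by blast
    then show ?thesis using notD by simp
  next
    case 4
    then have ne: "S \<noteq> []" and ml: "m < last S" by auto
    define j where "j = last S"
    note sp = sorted_last_split[OF S(1) ne]
    have sS: "sum_list (map f S) = sum_list (map f (butlast S)) + f j"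
      using sum_split[OF ne, of f] j_def by simp
    have "\<forall>i\<in>set S. i < Suc j" using all_lt_last[OF S(1) ne] j_def by auto
    then have "sum_list (map f S) \<in> sumsF f (Suc j)" by (rule sumsF_mem[OF S(1)])
    then have inV: "k \<in> VF f (Suc j)" unfolding k using ml j_def by (intro VF_mem) auto
    have notV: "k \<notin> VF f j"
    proof
      assume kv: "k \<in> VF f j"
      have bs: "sum_list (map f (butlast S)) \<in> sumsF f j" using sp(2,3) j_def by (intro sumsF_mem) auto
      have "- sum_list (map f (butlast S)) + k + f m \<in> ForbF f j"
        using Forb2[OF bs kv] ml j_def by simp
      moreover have "- sum_list (map f (butlast S)) + k + f m = f j"
        unfolding k sS by (simp add: add.assoc)
      ultimately show False using gen by simp
    qed
    show ?thesis using inV notV ml j_def by (intro exI[of _ j]) auto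
  next
    case 1
    have "\<forall>i\<in>set S. i < m" using 1 by simp
    then show ?thesis using lowcase by blast
  next
    case 2
    have "\<forall>i\<in>set S. i < m"
    proof
      fix i assume "i \<in> set S"
      then have "i \<le> last S" using all_lt_last[OF S(1)] 2 by blast
      then show "i < m" using 2 by simp
    qed
    then show ?thesis using lowcase by blast
  qed
qed



lemma part4b:
  fixes A :: "'a::group_add set" and g :: "nat \<Rightarrow> 'a"
  assumes xA: "x \<in> A" and ginj: "inj g" and FPA: "(\<lambda>y. x + y) ` FP g \<subseteq> A"
  shows "\<exists>B. B \<subseteq> A \<and> B \<noteq> {} \<and> recurrent B"
proof -
  have chx: "\<exists>n. (\<forall>i\<in>set ns. i < n) \<and> g n \<notin> ForbF ((!) (map g ns)) (length ns)" for ns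
  proof -
    let ?E = "ForbF ((!) (map g ns)) (length ns)"
    have "finite (g -` ?E \<union> {..sum_list ns})" using finite_vimageI[OF finite_ForbF ginj] by simp
    then obtain n where n: "n \<notin> g -` ?E \<union> {..sum_list ns}"
      using ex_new_if_finite[OF infinite_UNIV_nat] by blast
    have "\<forall>i\<in>set ns. i < n"
    proof
      fix i assume "i \<in> set ns"
      then have "i \<le> sum_list ns" by (rule member_le_sum_list) simp_all
      then show "i < n" using n by simp
    qed
    then show ?thesis using n by blast
  qed
  have "\<exists>idx. \<forall>j. (\<forall>i\<in>set (map idx [0..<j]). i < idx j) \<and>
      g (idx j) \<notin> ForbF ((!) (map g (map idx [0..<j]))) (length (map idx [0..<j]))"
    by (rule dep_choice[where Q="\<lambda>ns n. (\<forall>i\<in>set ns. i < n) \<and> g n \<notin> ForbF ((!) (map g ns)) (length ns)"])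
      (rule chx)
  then obtain idx where idxQ': "\<forall>j. (\<forall>i\<in>set (map idx [0..<j]). i < idx j) \<and>
      g (idx j) \<notin> ForbF ((!) (map g (map idx [0..<j]))) (length (map idx [0..<j]))"
    by (rule exE)
  define f where "f j = g (idx j)" for j
  have mono: "idx i < idx j" if "i < j" for i j
  proof -
    have "\<forall>i\<in>set (map idx [0..<j]). i < idx j" using spec[OF idxQ', of j] by (rule conjunct1)
    moreover have "idx i \<in> set (map idx [0..<j])" using that by simp
    ultimately show ?thesis by blast
  qed
  have gen: "f j \<notin> ForbF f j" for j
  proof -
    have "ForbF ((!) (map g (map idx [0..<j]))) j = ForbF f j"
      by (rule ForbF_cong) (simp add: f_def)
    moreover have "g (idx j) \<notin> ForbF ((!) (map g (map idx [0..<j]))) (length (map idx [0..<j]))"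
      using spec[OF idxQ', of j] by (rule conjunct2)
    ultimately show ?thesis unfolding f_def by (simp only: length_map length_upt diff_zero not_False_eq_True)
  qed
  have finj: "inj f"
  proof (rule injI)
    fix i j assume "f i = f j"
    then have "idx i = idx j" using ginj unfolding f_def by (simp add: inj_eq)
    show "i = j"
    proof (rule ccontr)
      assume "i \<noteq> j"
      then have "i < j \<or> j < i" by arith
      then show False
      proof (elim disjE)
        assume "i < j" then have "idx i < idx j" by (rule mono)
        then show False using \<open>idx i = idx j\<close> by simp
      next
        assume "j < i" then have "idx j < idx i" by (rule mono)
        then show False using \<open>idx i = idx j\<close> by simp
      qed
    qed
  qed
  define D where "D = (\<lambda>is. sum_list (map f is)) ` {is. sorted_wrt (<) is}"
  have key: "\<exists>N. \<forall>m\<ge>N. (k + f m \<in> D \<longleftrightarrow> k \<in> D)" for k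
  proof (cases "k \<in> D")
    case True
    then obtain S where S: "sorted_wrt (<) S" "k = sum_list (map f S)" unfolding D_def by blast
    have "k + f m \<in> D" if m: "m \<ge> Suc (sum_list S)" for m
    proof -
      have "\<forall>i\<in>set S. i < m"
      proof
        fix i assume "i \<in> set S"
        then have "i \<le> sum_list S" by (rule member_le_sum_list) simp_all
        then show "i < m" using m by simp
      qed
      then have "sorted_wrt (<) (S @ [m])" using S(1) by (simp add: sorted_wrt_append)
      moreover have "k + f m = sum_list (map f (S @ [m]))" using S(2) by simp
      ultimately show ?thesis unfolding D_def by blast
    qed
    then show ?thesis using True by blast
  next
    case False
    show ?thesis
    proof (cases "\<exists>t. k \<in> VF f t")
      case True
      define t0 where "t0 = (LEAST t. k \<in> VF f t)"
      have kt0: "k \<in> VF f t0" unfolding t0_def using True by (rule LeastI_ex)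
      have "k + f m \<notin> D" if "m \<ge> t0" for m
      proof
        assume "k + f m \<in> D"
        then obtain j where j: "j \<ge> m" "k \<notin> VF f j"
          using key_generic[OF gen False D_def] by blast
        have "VF f t0 \<subseteq> VF f j" using j(1) that by (intro VF_mono) simp
        then show False using kt0 j(2) by blast
      qed
      then show ?thesis using False by blast
    next
      case nt: False
      have "k + f m \<notin> D" for m
      proof
        assume "k + f m \<in> D"
        then obtain j where "k \<in> VF f (Suc j)"
          using key_generic[OF gen False D_def] by blast
        then show False using nt by blast
      qed
      then show ?thesis using False by blast
    qed
  qed
  define B where "B = (\<lambda>d. x + d) ` D"
  have memB: "y \<in> B \<longleftrightarrow> - x + y \<in> D" for y
  proof
    assume "y \<in> B"
    then obtain d where "d \<in> D" "y = x + d" unfolding B_def by blast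
    then show "- x + y \<in> D" by (simp add: add.assoc[symmetric])
  next
    assume a: "- x + y \<in> D"
    have "y = x + (- x + y)" by (simp add: add.assoc[symmetric])
    then show "y \<in> B" unfolding B_def using a by blast
  qed
  have "B \<subseteq> A"
  proof
    fix y assume "y \<in> B"
    then obtain "is" where y: "y = x + sum_list (map f is)" and so: "sorted_wrt (<) is"
      unfolding B_def D_def by blast
    show "y \<in> A"
    proof (cases "is = []")
      case True then show ?thesis using y xA by simp
    next
      case False
      have "sorted_wrt (<) (map idx is)"
        unfolding sorted_wrt_map by (rule sorted_wrt_mono_rel[OF _ so]) (rule mono)
      moreover have "map idx is \<noteq> []" using False by simp
      moreover have "map f is = map g (map idx is)" by (induction "is") (simp_all add: f_def)
      then have "sum_list (map f is) = sum_list (map g (map idx is))" by (rule arg_cong)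
      ultimately have "sum_list (map f is) \<in> FP g" unfolding FP_def by blast
      then show ?thesis using y FPA by blast
    qed
  qed
  moreover have "x \<in> B"
  proof -
    have "sum_list (map f []) \<in> D" unfolding D_def by (rule imageI) simp
    then show ?thesis by (simp add: memB)
  qed
  moreover have "recurrent B" unfolding recurrent_iff
  proof (intro allI impI)
    fix K :: "'a set" assume K: "finite K"
    define Nk where "Nk k = (SOME N. \<forall>m\<ge>N. ((- x + k) + f m \<in> D \<longleftrightarrow> - x + k \<in> D))" for k
    have Nk: "\<forall>m\<ge>Nk k. ((- x + k) + f m \<in> D \<longleftrightarrow> - x + k \<in> D)" for k
      unfolding Nk_def by (rule someI_ex) (rule key)
    define M where "M = Max (insert 0 (Nk ` K))"
    have MN: "Nk k \<le> M" if "k \<in> K" for k unfolding M_def using K that by simp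
    have "(\<lambda>m. - f m) ` {M..} \<subseteq> {g. \<forall>k\<in>K. (k \<in> rtrans B g) = (k \<in> B)}"
    proof (rule image_subsetI, rule CollectI, rule ballI)
      fix m k assume m: "m \<in> {M..}" and k: "k \<in> K"
      have "(k \<in> rtrans B (- f m)) = (k + f m \<in> B)" by (simp only: mem_rtrans minus_minus)
      also have "\<dots> = ((- x + k) + f m \<in> D)" by (simp only: memB add.assoc)
      also have "\<dots> = (- x + k \<in> D)"
      proof -
        have le: "Nk k \<le> m" using MN[OF k] m by simp
        show ?thesis by (rule Nk[of k, rule_format, OF le])
      qed
      also have "\<dots> = (k \<in> B)" by (simp only: memB)
      finally show "(k \<in> rtrans B (- f m)) = (k \<in> B)" .
    qed
    moreover have "infinite ((\<lambda>m. - f m) ` {M..})"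
    proof
      assume "finite ((\<lambda>m. - f m) ` {M..})"
      moreover have "inj_on (\<lambda>m. - f m) {M..}"
      proof (rule inj_onI)
        fix a c assume "- f a = - f c"
        then have "f a = f c" by (rule neg_equal_iff_equal[THEN iffD1])
        then show "a = c" by (rule injD[OF finj])
      qed
      ultimately have "finite {M..}" by (rule finite_imageD)
      then show False using infinite_Ici[of M] by (rule notE[rotated])
    qed
    ultimately show "infinite {g. \<forall>k\<in>K. (k \<in> rtrans B g) = (k \<in> B)}" by (rule infinite_super)
  qed
  ultimately show ?thesis by blast
qed


theorem theorem4p3:
  fixes A :: "'a::group_add set"
  assumes "infinite (UNIV :: 'a set)"
  shows "(\<forall>n::nat. \<not> n_thin n A \<longleftrightarrow>
            (\<exists>F (x::nat \<Rightarrow> 'a). finite F \<and> card F = Suc n \<and> inj x \<and>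
                (\<forall>k. (\<lambda>f. f + x k) ` F \<subseteq> A)))
      \<and> (\<not> sparse A \<longleftrightarrow>
            (\<exists>(x::nat \<Rightarrow> 'a) y. inj x \<and> inj y \<and> (\<forall>n m. n \<le> m \<longrightarrow> x n + y m \<in> A)))
      \<and> (\<not> scattered A \<longleftrightarrow> (\<exists>(g::nat \<Rightarrow> 'a) b. inj g \<and> PSFP g b \<subseteq> A))
      \<and> ((\<exists>B. B \<subseteq> A \<and> B \<noteq> {} \<and> recurrent B) \<longleftrightarrow>
            (\<exists>x\<in>A. \<exists>g::nat \<Rightarrow> 'a. inj g \<and> (\<lambda>y. x + y) ` FP g \<subseteq> A))"
proof (intro conjI)
  show "\<forall>n::nat. \<not> n_thin n A \<longleftrightarrow>
            (\<exists>F (x::nat \<Rightarrow> 'a). finite F \<and> card F = Suc n \<and> inj x \<and>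
                (\<forall>k. (\<lambda>f. f + x k) ` F \<subseteq> A))"
    by (intro allI) (rule part1)
  show "\<not> sparse A \<longleftrightarrow>
            (\<exists>(x::nat \<Rightarrow> 'a) y. inj x \<and> inj y \<and> (\<forall>n m. n \<le> m \<longrightarrow> x n + y m \<in> A))"
    by (rule part2)
  show "\<not> scattered A \<longleftrightarrow> (\<exists>(g::nat \<Rightarrow> 'a) b. inj g \<and> PSFP g b \<subseteq> A)"
  proof
    assume "\<not> scattered A"
    then show "\<exists>(g::nat \<Rightarrow> 'a) b. inj g \<and> PSFP g b \<subseteq> A" by (rule part3a[OF assms])
  next
    assume "\<exists>(g::nat \<Rightarrow> 'a) b. inj g \<and> PSFP g b \<subseteq> A"
    then obtain g b where "inj (g::nat \<Rightarrow> 'a)" "PSFP g b \<subseteq> A" by blast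
    then show "\<not> scattered A" by (rule part3b)
  qed
  show "(\<exists>B. B \<subseteq> A \<and> B \<noteq> {} \<and> recurrent B) \<longleftrightarrow>
            (\<exists>x\<in>A. \<exists>g::nat \<Rightarrow> 'a. inj g \<and> (\<lambda>y. x + y) ` FP g \<subseteq> A)"
  proof
    assume "\<exists>B. B \<subseteq> A \<and> B \<noteq> {} \<and> recurrent B"
    then obtain B where "B \<subseteq> A" "B \<noteq> {}" "recurrent B" by blast
    then show "\<exists>x\<in>A. \<exists>g::nat \<Rightarrow> 'a. inj g \<and> (\<lambda>y. x + y) ` FP g \<subseteq> A" by (rule part4a[OF assms])
  next
    assume "\<exists>x\<in>A. \<exists>g::nat \<Rightarrow> 'a. inj g \<and> (\<lambda>y. x + y) ` FP g \<subseteq> A"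
    then obtain x and g :: "nat \<Rightarrow> 'a" where "x \<in> A" "inj g" "(\<lambda>y. x + y) ` FP g \<subseteq> A" by blast
    then show "\<exists>B. B \<subseteq> A \<and> B \<noteq> {} \<and> recurrent B" by (rule part4b)
  qed
qed

end
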